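(* Let $A \in \mathbb{C}^{n \times n}$ and let $\beta \geq 1$ be a real number bounding the spectral radius of $A$ (i.e. every eigenvalue $\lambda$ of $A$ satisfies $|\lambda| \le \beta$). Let $\mu_A(X) = \sum_{i=0}^{d} m_i X^i$ be the minimal polynomial of $A$, of degree $d$. Then for all $i$, $$|m_i| \leq \begin{cases} \beta^d & \text{if } d \leq \beta, \\ \min\left\{ \sqrt{\beta d}^{\,d}\ ;\ \sqrt{\frac{2}{d\pi}}\, 2^d \beta^d \right\} & \text{otherwise.} \end{cases}$$
   Context: The minimal polynomial of $A$ is the monic polynomial of least degree annihilating $A$. *)

theory Defs
  imports "Jordan_Normal_Form.Char_Poly"
begin

text \<open>Evaluation of a polynomial at a square matrix (Horner scheme):
  for p = sum c_i X^i this is sum c_i A^i, with A^0 the identity of size dim_row A.\<close>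
definition mat_poly :: "'a :: comm_ring_1 poly \<Rightarrow> 'a mat \<Rightarrow> 'a mat" where
  "mat_poly p A = foldr (\<lambda>c M. c \<cdot>\<^sub>m 1\<^sub>m (dim_row A) + A * M) (coeffs p)
                        (0\<^sub>m (dim_row A) (dim_row A))"

definition is_min_poly :: "'a :: field mat \<Rightarrow> 'a poly \<Rightarrow> bool" where
  "is_min_poly A p \<longleftrightarrow> lead_coeff p = 1 \<and> mat_poly p A = 0\<^sub>m (dim_row A) (dim_row A) \<and>
     (\<forall>q. lead_coeff q = 1 \<and> mat_poly q A = 0\<^sub>m (dim_row A) (dim_row A) \<longrightarrow> degree p \<le> degree q)"

end

theory Submission
  imports Defs "HOL-Analysis.Analysis"
begin


lemma mat_poly_carrier: "A \<in> carrier_mat n n \<Longrightarrow> mat_poly p A \<in> carrier_mat n n"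
proof (induction p)
  case 0 then show ?case by (simp add: mat_poly_def)
next
  case (pCons a p)
  then show ?case by (auto simp: mat_poly_def cCons_def)
qed

lemma mat_poly_pCons: assumes "A \<in> carrier_mat n n"
  shows "mat_poly (pCons a p) A = a \<cdot>\<^sub>m 1\<^sub>m n + A * mat_poly p A"
proof (cases "p = 0 \<and> a = 0")
  case True then show ?thesis using assms by (auto simp: mat_poly_def)
next
  case False
  then have "coeffs (pCons a p) = a # coeffs p" by (auto simp: cCons_def)
  then show ?thesis using assms by (simp add: mat_poly_def)
qed

lemma mat_poly_0[simp]: "A \<in> carrier_mat n n \<Longrightarrow> mat_poly 0 A = 0\<^sub>m n n"
  by (simp add: mat_poly_def)

lemma mat_poly_add: assumes A: "A \<in> carrier_mat n n"
  shows "mat_poly (p + q) A = mat_poly p A + mat_poly q A"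
proof (induction p q rule: poly_induct2)
  case 0 then show ?case using A by simp
next
  case (pCons a p b q)
  have c: "mat_poly p A \<in> carrier_mat n n" "mat_poly q A \<in> carrier_mat n n"
    using A mat_poly_carrier by auto
  have "mat_poly (pCons a p + pCons b q) A = (a + b) \<cdot>\<^sub>m 1\<^sub>m n + A * (mat_poly p A + mat_poly q A)"
    using pCons A by (simp add: mat_poly_pCons)
  also have "\<dots> = (a \<cdot>\<^sub>m 1\<^sub>m n + A * mat_poly p A) + (b \<cdot>\<^sub>m 1\<^sub>m n + A * mat_poly q A)"
    using A c by (simp add: mult_add_distrib_mat add_smult_distrib_left_mat, auto simp: algebra_simps)
  finally show ?case using A by (simp add: mat_poly_pCons)
qed

lemma mat_poly_smult: assumes A: "A \<in> carrier_mat n n"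
  shows "mat_poly (Polynomial.smult c p) A = c \<cdot>\<^sub>m mat_poly p A"
proof (induction p)
  case 0 then show ?case using A by simp
next
  case (pCons a p)
  have c: "mat_poly p A \<in> carrier_mat n n" using A mat_poly_carrier by auto
  have "mat_poly (Polynomial.smult c (pCons a p)) A = (c * a) \<cdot>\<^sub>m 1\<^sub>m n + A * (c \<cdot>\<^sub>m mat_poly p A)"
    using pCons A by (simp add: mat_poly_pCons)
  also have "\<dots> = c \<cdot>\<^sub>m (a \<cdot>\<^sub>m 1\<^sub>m n + A * mat_poly p A)"
  proof -
    have e: "c \<cdot>\<^sub>m (a \<cdot>\<^sub>m 1\<^sub>m n) = (c * a) \<cdot>\<^sub>m 1\<^sub>m n" by (rule eq_matI) auto
    show ?thesis
    using A c by (subst add_smult_distrib_left_mat[of _ n n], auto simp: mult_smult_distrib[of _ n n _ n] e)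
  qed
  finally show ?case using A by (simp add: mat_poly_pCons)
qed

lemma mat_poly_pCons0: assumes A: "A \<in> carrier_mat n n"
  shows "mat_poly (pCons 0 p) A = A * mat_poly p A"
proof -
  have c: "A * mat_poly p A \<in> carrier_mat n n" using A mat_poly_carrier[OF A] by (metis mult_carrier_mat)
  have "0 \<cdot>\<^sub>m 1\<^sub>m n = (0\<^sub>m n n :: 'a mat)" by (rule eq_matI) auto
  then show ?thesis using A c by (simp add: mat_poly_pCons)
qed

lemma mat_poly_linear: assumes A: "A \<in> carrier_mat n n"
  shows "mat_poly ([:-l,1:] * q) A = char_matrix A l * mat_poly q A"
proof -
  have Q: "mat_poly q A \<in> carrier_mat n n" using A mat_poly_carrier by auto
  have e: "[:-l,1:] * q = Polynomial.smult (-l) q + pCons 0 q" by simp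
  have "mat_poly ([:-l,1:] * q) A = (-l) \<cdot>\<^sub>m mat_poly q A + A * mat_poly q A"
    by (simp only: e mat_poly_add[OF A] mat_poly_smult[OF A] mat_poly_pCons0[OF A])
  also have "\<dots> = A * mat_poly q A + ((-l) \<cdot>\<^sub>m 1\<^sub>m n) * mat_poly q A"
    using A Q by (simp add: mult_smult_assoc_mat[of _ n n _ n] comm_add_mat[of _ n n])
  also have "\<dots> = (A + (-l) \<cdot>\<^sub>m 1\<^sub>m n) * mat_poly q A"
    using A Q by (simp add: add_mult_distrib_mat[of A n n "(-l) \<cdot>\<^sub>m 1\<^sub>m n"])
  finally show ?thesis using A by (simp add: char_matrix_def)
qed

lemma root_eigen: fixes A :: "'a :: field mat"
  assumes A: "A \<in> carrier_mat n n" and mp: "is_min_poly A m" and r: "poly m l = 0"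
  shows "eigenvalue A l"
proof -
  from r obtain q where mq: "m = [:-l,1:] * q" using poly_eq_0_iff_dvd by (metis dvdE)
  have m0: "m \<noteq> 0" using mp unfolding is_min_poly_def by auto
  then have q0: "q \<noteq> 0" using mq by auto
  have d1: "degree [:-l,1:] = 1" by simp
  have dm: "degree m = degree q + 1" using mq q0 degree_mult_eq[of "[:-l,1:]" q] d1 by simp
  have "lead_coeff m = lead_coeff [:-l,1:] * lead_coeff q" by (simp only: mq lead_coeff_mult)
  then have lq: "lead_coeff q = 1" using mp unfolding is_min_poly_def by simp
  have dA: "dim_row A = n" using A by auto
  have Qn: "mat_poly q A \<noteq> 0\<^sub>m n n"
  proof
    assume "mat_poly q A = 0\<^sub>m n n"
    then have "degree m \<le> degree q" using mp lq dA unfolding is_min_poly_def by auto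
    then show False using dm by simp
  qed
  define Q where "Q = mat_poly q A"
  have Q: "Q \<in> carrier_mat n n" using A mat_poly_carrier Q_def by auto
  have CQ: "char_matrix A l * Q = 0\<^sub>m n n"
  proof -
    have "mat_poly m A = 0\<^sub>m n n" using mp dA unfolding is_min_poly_def by simp
    then show ?thesis unfolding Q_def mq mat_poly_linear[OF A] .
  qed
  obtain i j where ij: "i < n" "j < n" "Q $$ (i,j) \<noteq> 0"
    using Qn Q unfolding Q_def[symmetric] by (metis (no_types, lifting) carrier_matD(1,2) eq_matI index_zero_mat(1,2,3))
  define v where "v = col Q j"
  have v: "v \<in> carrier_vec n" using Q v_def by auto
  have v0: "v \<noteq> 0\<^sub>v n"
  proof
    assume "v = 0\<^sub>v n"
    then have "v $ i = 0" using ij by simp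
    then show False using ij Q v_def by auto
  qed
  have "char_matrix A l *\<^sub>v v = col (char_matrix A l * Q) j"
    using A Q ij v_def by (auto simp: mult_mat_vec_def)
  also have "\<dots> = 0\<^sub>v n" using CQ ij by auto
  finally show ?thesis using v v0 eigenvalue_char_matrix[OF A] by auto
qed



lemma aux_id: fixes x s F f q :: real
  assumes "x + 1 \<noteq> 0" "f \<noteq> 0" "q \<noteq> 0"
  shows "s * ((2 * x + 1) * (2 * x + 2) * F) / (((x + 1) * f) * (4 * q)) = (x + 1/2) * (s * F / (f * q))"
proof -
  have "(2 * x + 1) * (2 * x + 2) = (x + 1/2) * ((x + 1) * 4)" by (simp add: algebra_simps)
  then have "s * ((2 * x + 1) * (2 * x + 2) * F) / (((x + 1) * f) * (4 * q))
     = (x + 1/2) * (s * F / (f * q)) * (((x + 1) * 4) / ((x + 1) * 4))"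
    by (simp add: ac_simps)
  then show ?thesis using assms by simp
qed

lemma Gamma_half_fact: "Gamma (real n + 1/2) = sqrt pi * fact (2*n) / (fact n * 4^n)"
proof (induction n)
  case 0 then show ?case by (simp add: Gamma_one_half_real)
next
  case (Suc n)
  have nz: "real n + 1/2 \<notin> \<int>\<^sub>\<le>\<^sub>0"
  proof
    assume "real n + 1/2 \<in> \<int>\<^sub>\<le>\<^sub>0"
    then have "real n + 1/2 \<le> 0" by (rule nonpos_Ints_nonpos)
    then show False by simp
  qed
  have "Gamma (real (Suc n) + 1/2) = Gamma ((real n + 1/2) + 1)" by (simp add: algebra_simps)
  also have "\<dots> = (real n + 1/2) * Gamma (real n + 1/2)" using Gamma_plus1[OF nz] .
  also have "\<dots> = (real n + 1/2) * (sqrt pi * fact (2*n) / (fact n * 4^n))" using Suc by simp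
  also have "\<dots> = sqrt pi * fact (2 * Suc n) / (fact (Suc n) * 4 ^ Suc n)"
  proof -
    have f1: "fact (2 * Suc n) = (2 * real n + 1) * (2 * real n + 2) * (fact (2*n) :: real)"
      by (simp add: algebra_simps fact_Suc)
    have f2: "fact (Suc n) = (real n + 1) * (fact n :: real)" by simp
    have "sqrt pi * fact (2 * Suc n) / (fact (Suc n) * 4 ^ Suc n) =
          sqrt pi * ((2 * real n + 1) * (2 * real n + 2) * fact (2*n)) / (((real n + 1) * fact n) * (4 * 4 ^ n))"
      unfolding f1 f2 by simp
    also have "\<dots> = (real n + 1/2) * (sqrt pi * fact (2*n) / (fact n * 4^n))"
      by (rule aux_id) auto
    finally show ?thesis by simp
  qed
  finally show ?case .
qed

lemma Gamma_half_sq: assumes "n \<ge> 1"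
  shows "Gamma (real n + 1/2) ^ 2 \<le> fact n ^ 2 / real n"
proof -
  have n0: "real n > 0" using assms by simp
  have "(ln \<circ> Gamma) ((1 - 1/2) *\<^sub>R real n + (1/2) *\<^sub>R (real n + 1))
        \<le> (1 - 1/2) * (ln \<circ> Gamma) (real n) + (1/2) * (ln \<circ> Gamma) (real n + 1)"
    by (rule convex_onD[OF log_convex_Gamma_real]) (use n0 in auto)
  moreover have "(1 - 1/2) *\<^sub>R real n + (1/2) *\<^sub>R (real n + 1) = real n + 1/2" by (simp add: field_simps)
  ultimately have "ln (Gamma (real n + 1/2)) \<le> (ln (Gamma (real n)) + ln (Gamma (real n + 1))) / 2"
    by (simp only: o_def) simp
  moreover have p: "Gamma (real n) > 0" "Gamma (real n + 1) > 0" "Gamma (real n + 1/2) > 0"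
    using n0 by auto
  moreover have e1: "ln (Gamma (real n) * Gamma (real n + 1)) = ln (Gamma (real n)) + ln (Gamma (real n + 1))"
    using p by (intro ln_mult_pos) auto
  moreover have e2: "ln (Gamma (real n + 1/2) ^ 2) = 2 * ln (Gamma (real n + 1/2))"
    using p by (simp add: ln_realpow)
  ultimately have "ln (Gamma (real n + 1/2) ^ 2) \<le> ln (Gamma (real n) * Gamma (real n + 1))"
    unfolding e1 e2 by argo
  then have "Gamma (real n + 1/2) ^ 2 \<le> Gamma (real n) * Gamma (real n + 1)"
  proof -
    have "Gamma (real n + 1/2) ^ 2 > 0" by (rule zero_less_power[OF p(3)])
    moreover have "Gamma (real n) * Gamma (real n + 1) > 0" by (rule mult_pos_pos[OF p(1) p(2)])
    ultimately show ?thesis using \<open>ln (Gamma (real n + 1/2) ^ 2) \<le> ln (Gamma (real n) * Gamma (real n + 1))\<close>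
      by (simp only: ln_le_cancel_iff)
  qed
  also have "Gamma (real n) * Gamma (real n + 1) = fact n ^ 2 / real n"
  proof -
    have g1: "Gamma (real n + 1) = fact n" using Gamma_fact[of n] by (simp add: add.commute)
    have g2: "Gamma (real n + 1) = real n * Gamma (real n)"
      using Gamma_plus1[of "real n"] n0 by (metis nonpos_Ints_nonpos not_le)
    show ?thesis using g1 g2 n0 by (simp add: field_simps power2_eq_square)
  qed
  finally show ?thesis .
qed

lemma central_binom_upper: assumes "n \<ge> 1"
  shows "real ((2*n) choose n) \<le> 4^n / sqrt (pi * real n)"
proof -
  have n0: "real n > 0" using assms by simp
  have c: "real ((2*n) choose n) = fact (2*n) / (fact n)^2"
    by (simp add: binomial_fact power2_eq_square mult_2)
  have g: "Gamma (real n + 1/2) = sqrt pi * (real ((2*n) choose n) * fact n / 4^n)"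
    unfolding Gamma_half_fact c by (simp add: field_simps power2_eq_square)
  have "(sqrt pi * (real ((2*n) choose n) * fact n / 4^n))^2 \<le> fact n ^ 2 / real n"
    using Gamma_half_sq[OF assms] unfolding g .
  then have "pi * (real ((2*n) choose n))^2 * (fact n)^2 / (4^n)^2 \<le> fact n ^ 2 / real n"
    by (simp add: power_mult_distrib power_divide)
  then have "(real ((2*n) choose n))^2 \<le> (4^n)^2 / (pi * real n)"
    using n0 pi_gt_zero by (simp add: field_simps)
  then have "real ((2*n) choose n) \<le> sqrt ((4^n)^2 / (pi * real n))"
    by (simp add: real_le_rsqrt)
  also have "\<dots> = 4^n / sqrt (pi * real n)" by (simp add: real_sqrt_divide)
  finally show ?thesis .
qed

lemma binom_central_bound: assumes "d \<ge> 1"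
  shows "real (d choose i) \<le> sqrt (2 / (real d * pi)) * 2 ^ d"
proof -
  have "real (d choose i) \<le> real (d choose (d div 2))" using binomial_maximum by simp
  also have "\<dots> \<le> sqrt (2 / (real d * pi)) * 2 ^ d"
  proof (cases "even d")
    case True
    then obtain n where d: "d = 2 * n" by auto
    with assms have n: "n \<ge> 1" by simp
    have "real (d choose (d div 2)) \<le> 4^n / sqrt (pi * real n)"
      using central_binom_upper[OF n] d by simp
    also have "\<dots> = sqrt (2 / (real d * pi)) * 2 ^ d"
    proof -
      have f4: "(4::real)^n = (2^n)^2" by (simp add: power2_eq_square flip: power_mult_distrib)
      show ?thesis using d f4 by (simp add: power_mult real_sqrt_divide field_simps mult.commute)
    qed
    finally show ?thesis .
  next
    case False
    then obtain n where d: "d = 2 * n + 1" using oddE by blast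
    have dd: "d div 2 = n" using d by simp
    have "(2*(n+1)) choose (n+1) = ((2*n+1) choose n) + ((2*n+1) choose (n+1))"
      by (simp add: numeral_2_eq_2)
    moreover have "(2*n+1) choose (n+1) = (2*n+1) choose n"
      using binomial_symmetric[of "n+1" "2*n+1"] by simp
    ultimately have e: "real ((2*(n+1)) choose (n+1)) = 2 * real (d choose (d div 2))"
      using d dd by simp
    have "2 * real (d choose (d div 2)) \<le> 4^(n+1) / sqrt (pi * real (n+1))"
      using central_binom_upper[of "n+1"] e by simp
    have "real (d choose (d div 2)) \<le> 2 ^ d / sqrt (pi * (real n + 1))"
    proof -
      have f4: "(4::real)^n = (2^n)^2" by (simp add: power2_eq_square flip: power_mult_distrib)
      show ?thesis using d f4 \<open>2 * real (d choose (d div 2)) \<le> 4^(n+1) / sqrt (pi * real (n+1))\<close>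
        by (simp add: power_mult power_add field_simps)
    qed
    also have "\<dots> \<le> 2 ^ d * sqrt (2 / (real d * pi))"
    proof -
      have "1 / sqrt (pi * (real n + 1)) \<le> sqrt (2 / (real d * pi))"
      proof -
        have "1 / sqrt (pi * (real n + 1)) = sqrt (2 / (pi * (2 * real n + 2)))"
        proof -
          have "2 / (pi * (2 * real n + 2)) = 1 / (pi * (real n + 1))"
          proof -
            have a: "real n + 1 > 0" "2 * real n + 2 > 0" "pi > 0" by auto
            then have "pi * (2 * real n + 2) \<noteq> 0" "pi * (real n + 1) \<noteq> 0" by auto
            then show ?thesis by (simp add: divide_simps)
          qed
          then show ?thesis by (simp add: real_sqrt_divide)
        qed
        also have "\<dots> \<le> sqrt (2 / (real d * pi))"
          using d pi_gt_zero by (intro real_sqrt_le_mono divide_left_mono) (auto simp: mult.commute)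
        finally show ?thesis .
      qed
      then show ?thesis by (simp add: divide_inverse mult_left_mono)
    qed
    finally show ?thesis by (simp add: mult.commute)
  qed
  finally show ?thesis .
qed

lemma P1: fixes \<beta> :: real assumes "real d \<le> \<beta>" "\<beta> \<ge> 1"
  shows "real (d choose i) * \<beta> ^ (d - i) \<le> \<beta> ^ d"
proof (cases "i \<le> d")
  case True
  have "real (d choose i) \<le> real d ^ i" using binomial_le_pow[OF True] by (metis of_nat_le_iff of_nat_power)
  also have "\<dots> \<le> \<beta> ^ i" using assms by (intro power_mono) auto
  finally have "real (d choose i) * \<beta> ^ (d - i) \<le> \<beta> ^ i * \<beta> ^ (d - i)"
    using assms by (intro mult_right_mono) auto
  also have "\<dots> = \<beta> ^ d" using True by (simp flip: power_add)
  finally show ?thesis .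
next
  case False then show ?thesis using assms by (simp add: binomial_eq_0)
qed

lemma P2: fixes \<beta> :: real assumes "\<beta> \<le> real d" "\<beta> \<ge> 1"
  shows "real (d choose i) * \<beta> ^ (d - i) \<le> sqrt (\<beta> * real d) ^ d"
proof (cases "i \<le> d")
  case False then show ?thesis using assms by (simp add: binomial_eq_0)
next
  case True
  have b0: "\<beta> > 0" using assms by simp
  have dpos: "real d \<ge> 1" using assms by simp
  have "(real (d choose i) * \<beta> ^ (d - i))^2 \<le> (\<beta> * real d) ^ d"
  proof (cases "2 * i \<le> d")
    case True2: True
    have "real (d choose i) \<le> real d ^ i" using binomial_le_pow[OF True] by (metis of_nat_le_iff of_nat_power)
    then have "(real (d choose i) * \<beta> ^ (d - i))^2 \<le> (real d ^ i * \<beta> ^ (d - i))^2"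
      using b0 by (intro power_mono mult_right_mono) auto
    also have "\<dots> = real d ^ (2*i) * (\<beta> ^ d * \<beta> ^ (d - 2*i))"
    proof -
      have e: "(d - i) * 2 = d + (d - 2 * i)" using True2 by simp
      show ?thesis by (simp add: power_mult_distrib power_mult[symmetric] mult.commute e power_add)
    qed
    also have "\<dots> \<le> real d ^ (2*i) * (\<beta> ^ d * real d ^ (d - 2*i))"
      using assms b0 by (intro mult_left_mono power_mono) auto
    also have "\<dots> = (\<beta> * real d) ^ d"
      using True2 by (simp add: power_mult_distrib algebra_simps flip: power_add)
    finally show ?thesis .
  next
    case False2: False
    have "real (d choose i) = real (d choose (d - i))" using binomial_symmetric[OF True] by simp
    also have "\<dots> \<le> real d ^ (d - i)" using binomial_le_pow[of "d - i" d] by (metis diff_le_self of_nat_le_iff of_nat_power)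
    finally have "(real (d choose i) * \<beta> ^ (d - i))^2 \<le> (real d ^ (d - i) * \<beta> ^ (d - i))^2"
      using b0 by (intro power_mono mult_right_mono) auto
    also have "\<dots> = (\<beta> * real d) ^ (2 * (d - i))"
      by (simp add: power_mult_distrib power_mult mult.commute)
    also have "\<dots> \<le> (\<beta> * real d) ^ d"
    proof -
      have "1 * 1 \<le> \<beta> * real d" using assms dpos by (intro mult_mono) auto
      then show ?thesis using False2 by (intro power_increasing) auto
    qed
    finally show ?thesis .
  qed
  then have "real (d choose i) * \<beta> ^ (d - i) \<le> sqrt ((\<beta> * real d) ^ d)"
    by (simp add: real_le_rsqrt)
  then show ?thesis using b0 by (simp add: real_sqrt_power)
qed

lemma P3: fixes \<beta> :: real assumes "d \<ge> 1" "\<beta> \<ge> 1"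
  shows "real (d choose i) * \<beta> ^ (d - i) \<le> sqrt (2 / (real d * pi)) * 2 ^ d * \<beta> ^ d"
proof -
  have "\<beta> ^ (d - i) \<le> \<beta> ^ d" using assms by (intro power_increasing) auto
  then have "real (d choose i) * \<beta> ^ (d - i) \<le> real (d choose i) * \<beta> ^ d"
    by (intro mult_left_mono) auto
  also have "\<dots> \<le> sqrt (2 / (real d * pi)) * 2 ^ d * \<beta> ^ d"
    using binom_central_bound[OF assms(1), of i] assms by (intro mult_right_mono) auto
  finally show ?thesis .
qed

lemma final_bound: fixes \<beta> c :: real assumes "\<beta> \<ge> 1" "c \<le> real (d choose i) * \<beta> ^ (d - i)"
  shows "c \<le> (if real d \<le> \<beta> then \<beta> ^ d
            else min (sqrt (\<beta> * real d) ^ d) (sqrt (2 / (real d * pi)) * 2 ^ d * \<beta> ^ d))"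
proof (cases "real d \<le> \<beta>")
  case True then show ?thesis using P1[OF True assms(1), of i] assms by simp
next
  case False
  then have "d \<ge> 1" using assms by (cases d) auto
  then show ?thesis using False P2[of \<beta> d i] P3[of d \<beta> i] assms by simp
qed



lemma coeff_prod_bound: fixes as :: "complex list" and \<beta> :: real
  assumes "\<forall>a\<in>set as. cmod a \<le> \<beta>" "\<beta> \<ge> 0"
  shows "cmod (coeff (\<Prod>a\<leftarrow>as. [:-a,1:]) i) \<le> real (length as choose i) * \<beta> ^ (length as - i)"
  using assms(1)
proof (induction as arbitrary: i)
  case Nil then show ?case by (cases i) auto
next
  case (Cons a as)
  define p where "p = (\<Prod>a\<leftarrow>as. [:-a,1:])"
  define n where "n = length as"
  have IH: "\<And>i. cmod (coeff p i) \<le> real (n choose i) * \<beta> ^ (n - i)"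
    using Cons unfolding p_def n_def by auto
  have a: "cmod a \<le> \<beta>" using Cons by auto
  have e: "(\<Prod>a\<leftarrow>a # as. [:-a,1:]) = Polynomial.smult (-a) p + pCons 0 p"
    unfolding p_def by simp
  have ce: "coeff (\<Prod>a\<leftarrow>a # as. [:-a,1:]) i = - a * coeff p i + coeff (pCons 0 p) i"
    unfolding e by simp
  have t1: "cmod (- a * coeff p i) \<le> \<beta> * (real (n choose i) * \<beta> ^ (n - i))"
    using a IH[of i] assms(2) by (simp add: norm_mult mult_mono)
  show ?case
  proof (cases i)
    case 0
    have "cmod (coeff (\<Prod>a\<leftarrow>a # as. [:-a,1:]) i) = cmod (- a * coeff p i)"
      unfolding ce using 0 by simp
    then have "cmod (coeff (\<Prod>a\<leftarrow>a # as. [:-a,1:]) i) \<le> \<beta> * (real (n choose i) * \<beta> ^ (n - i))"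
      using t1 by simp
    then show ?thesis using 0 n_def by simp
  next
    case (Suc j)
    have t2: "cmod (coeff (pCons 0 p) i) \<le> real (n choose j) * \<beta> ^ (n - j)"
      using IH[of j] Suc by simp
    have t3: "\<beta> * (real (n choose i) * \<beta> ^ (n - i)) = real (n choose i) * \<beta> ^ (n - j)"
    proof (cases "j < n")
      case True
      then have "n - j = Suc (n - i)" using Suc by simp
      then show ?thesis by simp
    next
      case False then show ?thesis using Suc by (simp add: binomial_eq_0)
    qed
    have "cmod (coeff (\<Prod>a\<leftarrow>a # as. [:-a,1:]) i) \<le> real (n choose i) * \<beta> ^ (n - j) + real (n choose j) * \<beta> ^ (n - j)"
      using ce t1 t2 t3 norm_triangle_le by (metis add_mono)
    also have "\<dots> = real (Suc n choose i) * \<beta> ^ (Suc n - i)"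
      using Suc by (simp add: algebra_simps)
    finally show ?thesis using n_def by simp
  qed
qed


theorem lemma3:
  fixes A :: "complex mat" and n :: nat and \<beta> :: real and m :: "complex poly" and d :: nat
  assumes "A \<in> carrier_mat n n"
    and "\<beta> \<ge> 1"
    and "\<forall>ev. eigenvalue A ev \<longrightarrow> cmod ev \<le> \<beta>"
    and "is_min_poly A m"
    and "d = degree m"
  shows "\<forall>i. cmod (coeff m i) \<le>
           (if real d \<le> \<beta> then \<beta> ^ d
            else min (sqrt (\<beta> * real d) ^ d) (sqrt (2 / (real d * pi)) * 2 ^ d * \<beta> ^ d))"
proof
  fix i
  from fundamental_theorem_algebra_factorized[of m] obtain as
    where f: "Polynomial.smult (coeff m (degree m)) (\<Prod>a\<leftarrow>as. [:- a, 1:]) = m" and l: "length as = degree m"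
    by blast
  have lc: "coeff m (degree m) = 1" using assms(4) unfolding is_min_poly_def by simp
  have mp: "m = (\<Prod>a\<leftarrow>as. [:- a, 1:])" using f lc by simp
  have roots: "\<forall>a\<in>set as. cmod a \<le> \<beta>"
  proof
    fix a assume "a \<in> set as"
    then have "poly m a = 0" unfolding mp by (induction as) auto
    then have "eigenvalue A a" using root_eigen[OF assms(1) assms(4)] by blast
    then show "cmod a \<le> \<beta>" using assms(3) by blast
  qed
  have "cmod (coeff m i) \<le> real (d choose i) * \<beta> ^ (d - i)"
    using coeff_prod_bound[OF roots, of i] assms(2,5) l mp by simp
  then show "cmod (coeff m i) \<le>
           (if real d \<le> \<beta> then \<beta> ^ d
            else min (sqrt (\<beta> * real d) ^ d) (sqrt (2 / (real d * pi)) * 2 ^ d * \<beta> ^ d))"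
    by (rule final_bound[OF assms(2)])
qed

end
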